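(* Let $(X,E)$ be a locally finite reflexive directed graph, let $R$ be a commutative $\mathbb{Q}$-algebra, and let $(X,\le)$ be the associated locally finite poset ($x\le y$ iff $x=y$ or there is a walk from $x$ to $y$). The adjacency map $\xi[x,y]=|E(x,y)|$ ($x\le y$) is invertible in the incidence algebra $[\mathbb{I}_{(X,\le)},R]$, and its inverse $\mu$ satisfies $\mu[x,x]=1/|E(x,x)|$ and, for $x\ne y$ with $x\le y$, $$\mu[x,y]=\sum_{\gamma\in W(x,y)}\frac{(-1)^{l(\gamma)}}{|E(v_0,v_0)|\,|E(v_1,v_1)|\cdots|E(v_{l(\gamma)},v_{l(\gamma)})|},$$ where for $\gamma=(\gamma_1,\dots,\gamma_n)$ we set $v_0=s(\gamma_1)$ and $v_i=t(\gamma_i)$ for $1\le i\le n$.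
   Context: A directed graph $(X,E)$ has a map $(s,t):E\to X\times X$, $E(x,y)$ the edges from $x$ to $y$; reflexive means $E(x,x)\ne\emptyset$ for all $x$. A walk of length $l(\gamma)=n\ge1$ is $(\gamma_1,\dots,\gamma_n)\in E^n$ with $t(\gamma_i)=s(\gamma_{i+1})$ and $s(\gamma_i)\ne t(\gamma_i)$; $W(x,y)$ is the set of walks from $x$ to $y$. Locally finite means $E(x,x)$ and $W(x,y)$ finite for all $x,y$. For a locally finite poset, $\mathbb{I}_{(X,\le)}$ is the set of intervals $[x,y]$ ($x\le y$), and the incidence algebra $[\mathbb{I}_{(X,\le)},R]$ has product $(f\star g)[x,z]=\sum_{x\le y\le z}f[x,y]g[y,z]$ and unit $\epsilon[x,y]=\delta_{x,y}$. *)

theory Defs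
  imports Main
begin

text \<open>A directed (multi)graph with vertex type 'x and edge type 'e, given by
  source and target maps s t.\<close>

definition edges :: "('e \<Rightarrow> 'x) \<Rightarrow> ('e \<Rightarrow> 'x) \<Rightarrow> 'x \<Rightarrow> 'x \<Rightarrow> 'e set" where
  "edges s t x y = {e. s e = x \<and> t e = y}"

definition is_walk :: "('e \<Rightarrow> 'x) \<Rightarrow> ('e \<Rightarrow> 'x) \<Rightarrow> 'e list \<Rightarrow> bool" where
  "is_walk s t \<gamma> \<longleftrightarrow> \<gamma> \<noteq> [] \<and> (\<forall>i<length \<gamma>. s (\<gamma> ! i) \<noteq> t (\<gamma> ! i))
     \<and> (\<forall>i. Suc i < length \<gamma> \<longrightarrow> t (\<gamma> ! i) = s (\<gamma> ! Suc i))"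

definition walks :: "('e \<Rightarrow> 'x) \<Rightarrow> ('e \<Rightarrow> 'x) \<Rightarrow> 'x \<Rightarrow> 'x \<Rightarrow> 'e list set" where
  "walks s t x y = {\<gamma>. is_walk s t \<gamma> \<and> s (hd \<gamma>) = x \<and> t (last \<gamma>) = y}"

definition reflexive_graph :: "('e \<Rightarrow> 'x) \<Rightarrow> ('e \<Rightarrow> 'x) \<Rightarrow> bool" where
  "reflexive_graph s t \<longleftrightarrow> (\<forall>x. edges s t x x \<noteq> {})"

definition locally_finite_graph :: "('e \<Rightarrow> 'x) \<Rightarrow> ('e \<Rightarrow> 'x) \<Rightarrow> bool" where
  "locally_finite_graph s t \<longleftrightarrow> (\<forall>x. finite (edges s t x x)) \<and> (\<forall>x y. finite (walks s t x y))"

definition walk_le :: "('e \<Rightarrow> 'x) \<Rightarrow> ('e \<Rightarrow> 'x) \<Rightarrow> 'x \<Rightarrow> 'x \<Rightarrow> bool" where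
  "walk_le s t x y \<longleftrightarrow> x = y \<or> walks s t x y \<noteq> {}"

text \<open>Incidence algebra over the order le with values in 'r: elements are functions
  f x y, only the values on intervals (le x y) matter.\<close>
definition conv :: "('x \<Rightarrow> 'x \<Rightarrow> bool) \<Rightarrow> ('x \<Rightarrow> 'x \<Rightarrow> 'r::comm_ring_1) \<Rightarrow> ('x \<Rightarrow> 'x \<Rightarrow> 'r) \<Rightarrow> 'x \<Rightarrow> 'x \<Rightarrow> 'r" where
  "conv le f g x z = (\<Sum>y\<in>{y. le x y \<and> le y z}. f x y * g y z)"

definition inc_unit :: "'x \<Rightarrow> 'x \<Rightarrow> 'r::comm_ring_1" where
  "inc_unit x y = (if x = y then 1 else 0)"

definition inc_inverse :: "('x \<Rightarrow> 'x \<Rightarrow> bool) \<Rightarrow> ('x \<Rightarrow> 'x \<Rightarrow> 'r::comm_ring_1) \<Rightarrow> ('x \<Rightarrow> 'x \<Rightarrow> 'r) \<Rightarrow> bool" where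
  "inc_inverse le f g \<longleftrightarrow> (\<forall>x z. le x z \<longrightarrow> conv le f g x z = inc_unit x z \<and> conv le g f x z = inc_unit x z)"

definition inc_invertible :: "('x \<Rightarrow> 'x \<Rightarrow> bool) \<Rightarrow> ('x \<Rightarrow> 'x \<Rightarrow> 'r::comm_ring_1) \<Rightarrow> bool" where
  "inc_invertible le f \<longleftrightarrow> (\<exists>g. inc_inverse le f g)"

text \<open>A commutative ring is a Q-algebra iff every positive integer is invertible.\<close>
definition Q_algebra :: "'r::comm_ring_1 itself \<Rightarrow> bool" where
  "Q_algebra _ \<longleftrightarrow> (\<forall>n::nat. n > 0 \<longrightarrow> (\<exists>y::'r. of_nat n * y = 1))"

definition nat_inv :: "nat \<Rightarrow> 'r::comm_ring_1" where
  "nat_inv n = (THE y. of_nat n * y = 1)"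

end

theory Submission imports Defs begin

lemma is_walk_Cons:
  "is_walk s t (e#\<gamma>) \<longleftrightarrow> s e \<noteq> t e \<and> (\<gamma> = [] \<or> (is_walk s t \<gamma> \<and> t e = s (hd \<gamma>)))"
proof (cases \<gamma>)
  case Nil then show ?thesis by (simp add: is_walk_def)
next
  case (Cons a l)
  show ?thesis
    unfolding is_walk_def Cons
    apply (simp only: length_Cons All_less_Suc2 nth_Cons_0 nth_Cons_Suc)
    apply (auto simp: hd_conv_nth)
    subgoal for i by (cases i) auto
    done
qed

lemma is_walk_append:
  "\<gamma> \<noteq> [] \<Longrightarrow> \<delta> \<noteq> [] \<Longrightarrow>
   is_walk s t (\<gamma>@\<delta>) \<longleftrightarrow> is_walk s t \<gamma> \<and> is_walk s t \<delta> \<and> t (last \<gamma>) = s (hd \<delta>)"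
proof (induction \<gamma>)
  case Nil then show ?case by simp
next
  case (Cons a \<gamma>)
  show ?case
  proof (cases "\<gamma> = []")
    case True then show ?thesis using Cons.prems by (simp add: is_walk_Cons)
  next
    case False then show ?thesis using Cons by (auto simp: is_walk_Cons)
  qed
qed

lemma is_walk_snoc:
  "is_walk s t (\<gamma>@[e]) \<longleftrightarrow> s e \<noteq> t e \<and> (\<gamma> = [] \<or> (is_walk s t \<gamma> \<and> t (last \<gamma>) = s e))"
  by (cases "\<gamma> = []") (auto simp: is_walk_append is_walk_Cons)

lemma walks_nonempty: "\<gamma> \<in> walks s t x y \<Longrightarrow> \<gamma> \<noteq> []"
  unfolding walks_def is_walk_def by auto

lemma walks_append: "\<gamma> \<in> walks s t x y \<Longrightarrow> \<delta> \<in> walks s t y z \<Longrightarrow> \<gamma>@\<delta> \<in> walks s t x z"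
proof -
  assume a: "\<gamma> \<in> walks s t x y" "\<delta> \<in> walks s t y z"
  have "\<gamma> \<noteq> []" "\<delta> \<noteq> []" using a walks_nonempty by metis+
  then show ?thesis using a unfolding walks_def by (auto simp: is_walk_append)
qed


locale lfg =
  fixes s t :: "'e \<Rightarrow> 'x"
  assumes rg: "reflexive_graph s t" and lf: "locally_finite_graph s t"
begin

abbreviation "W \<equiv> walks s t"
abbreviation "E \<equiv> edges s t"
abbreviation "le \<equiv> walk_le s t"

lemma fin_W: "finite (W x y)" using lf unfolding locally_finite_graph_def by auto

lemma closed_long: "\<gamma> \<in> W x x \<Longrightarrow> \<exists>\<delta>\<in>W x x. length \<delta> \<ge> n"
proof (induction n)
  case 0 then show ?case by auto
next
  case (Suc n)
  then obtain \<delta> where d: "\<delta> \<in> W x x" "length \<delta> \<ge> n" by auto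
  have "\<delta> @ \<gamma> \<in> W x x" using walks_append d Suc.prems by metis
  moreover have "length (\<delta>@\<gamma>) \<ge> Suc n" using d walks_nonempty[OF Suc.prems] by (cases \<gamma>) auto
  ultimately show ?case by blast
qed

lemma no_closed: "W x x = {}"
proof (rule ccontr)
  assume "W x x \<noteq> {}"
  then obtain \<gamma> where g: "\<gamma> \<in> W x x" by auto
  define M where "M = Max (length ` W x x)"
  obtain \<delta> where "\<delta> \<in> W x x" "length \<delta> \<ge> Suc M" using closed_long[OF g] by blast
  moreover have "length \<delta> \<le> M" unfolding M_def using fin_W calculation(1) by auto
  ultimately show False by simp
qed

lemma le_trans: "le x y \<Longrightarrow> le y z \<Longrightarrow> le x z"
  unfolding walk_le_def using walks_append by (metis all_not_in_conv)

lemma le_refl: "le x x" unfolding walk_le_def by simp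

lemma le_antisym: "le x y \<Longrightarrow> le y x \<Longrightarrow> x = y"
  unfolding walk_le_def using walks_append no_closed by (metis all_not_in_conv)

lemma le_walk: "le x y \<Longrightarrow> x \<noteq> y \<Longrightarrow> \<exists>\<gamma>. \<gamma> \<in> W x y"
  unfolding walk_le_def by auto

lemma interval_fin: "finite {y. le x y \<and> le y z}"
proof -
  have "{y. le x y \<and> le y z} \<subseteq> {x, z} \<union> (\<Union>\<gamma>\<in>W x z. t ` set \<gamma>)"
  proof
    fix y assume y: "y \<in> {y. le x y \<and> le y z}"
    show "y \<in> {x, z} \<union> (\<Union>\<gamma>\<in>W x z. t ` set \<gamma>)"
    proof (cases "y = x \<or> y = z")
      case False
      then obtain g1 g2 where g: "g1 \<in> W x y" "g2 \<in> W y z" using y le_walk by force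
      have "g1 @ g2 \<in> W x z" using g walks_append by metis
      moreover have "y \<in> t ` set (g1 @ g2)"
        using g(1) walks_nonempty[OF g(1)] unfolding walks_def by auto
      ultimately show ?thesis by blast
    qed auto
  qed
  then show ?thesis by (rule finite_subset) (auto simp: fin_W)
qed

lemma single_walk: "e \<in> E x y \<Longrightarrow> x \<noteq> y \<Longrightarrow> [e] \<in> W x y"
  unfolding walks_def edges_def is_walk_def by auto

lemma edge_le: "e \<in> E x y \<Longrightarrow> le x y"
  using single_walk unfolding walk_le_def by blast

lemma fin_E: "finite (E x y)"
proof (cases "x = y")
  case True then show ?thesis using lf unfolding locally_finite_graph_def by auto
next
  case False
  have "(\<lambda>e. [e]) ` E x y \<subseteq> W x y" using single_walk False by auto
  then have "finite ((\<lambda>e. [e]) ` E x y)" using fin_W finite_subset by metis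
  then show ?thesis by (rule finite_imageD) (auto simp: inj_on_def)
qed

lemma d_pos: "card (E x x) > 0"
  using rg fin_E unfolding reflexive_graph_def by (simp add: card_gt_0_iff)

end

lemma nat_inv:
  assumes "Q_algebra TYPE('r::comm_ring_1)" "n > 0"
  shows "of_nat n * (nat_inv n :: 'r) = 1"
proof -
  obtain y :: 'r where y: "of_nat n * y = 1" using assms unfolding Q_algebra_def by blast
  have "of_nat n * (THE y :: 'r. of_nat n * y = 1) = 1"
  proof (rule theI[of _ y])
    show "of_nat n * y = 1" by fact
    fix z :: 'r assume z: "of_nat n * z = 1"
    have "z = z * (of_nat n * y)" using y by simp
    also have "\<dots> = y" using z by (simp add: ac_simps)
    finally show "z = y" .
  qed
  then show ?thesis unfolding nat_inv_def .
qed


context lfg begin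

definition ii :: "'x \<Rightarrow> 'r::comm_ring_1" where "ii x = nat_inv (card (E x x))"
definition w :: "'e list \<Rightarrow> 'r::comm_ring_1" where
  "w \<gamma> = (-1)^length \<gamma> * (ii (s (hd \<gamma>)) * (\<Prod>i<length \<gamma>. ii (t (\<gamma>!i))))"
definition nu :: "'x \<Rightarrow> 'x \<Rightarrow> 'r::comm_ring_1" where
  "nu x z = (if x = z then ii x else \<Sum>\<gamma>\<in>W x z. w \<gamma>)"

lemma w_Cons: "\<gamma> \<noteq> [] \<Longrightarrow> s (hd \<gamma>) = t e \<Longrightarrow> w (e#\<gamma>) = - ii (s e) * (w \<gamma> :: 'r::comm_ring_1)"
  unfolding w_def length_Cons prod.lessThan_Suc_shift by simp

lemma w_single: "w [e] = - ii (s e) * (ii (t e) :: 'r::comm_ring_1)"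
  unfolding w_def by simp

lemma w_snoc: "\<gamma> \<noteq> [] \<Longrightarrow> w (\<gamma>@[e]) = - (w \<gamma> :: 'r::comm_ring_1) * ii (t e)"
  unfolding w_def by (simp add: nth_append)

lemma right_decomp:
  assumes xz: "x \<noteq> z"
  shows "(\<Sum>\<gamma>\<in>W x z. w \<gamma>) = - ii x * (\<Sum>y\<in>{y. le x y \<and> le y z \<and> y \<noteq> x}. of_nat (card (E x y)) * (nu y z :: 'r::comm_ring_1))"
proof -
  define F where "F = {e. s e = x \<and> t e \<noteq> x \<and> le (t e) z}"
  define T where "T e = (if t e = z then {[]} else W (t e) z)" for e
  define I where "I = {y. le x y \<and> le y z \<and> y \<noteq> x}"
  have WS: "W x z = (\<lambda>(e,g). e#g) ` Sigma F T"
  proof (rule set_eqI, rule iffI)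
    fix \<gamma> assume g: "\<gamma> \<in> W x z"
    then obtain e g' where ge: "\<gamma> = e#g'" using walks_nonempty by (metis list.exhaust)
    have "e \<in> F \<and> g' \<in> T e"
    proof (cases "g' = []")
      case True then show ?thesis using g ge
        unfolding F_def T_def walks_def by (auto simp: is_walk_Cons le_refl)
    next
      case False
      then have g'W: "g' \<in> W (t e) z" using g ge unfolding walks_def by (auto simp: is_walk_Cons)
      then have "t e \<noteq> z" using no_closed by auto
      then show ?thesis using g ge g'W unfolding F_def T_def walks_def walk_le_def
        by (auto simp: is_walk_Cons)
    qed
    then show "\<gamma> \<in> (\<lambda>(e,g). e#g) ` Sigma F T" using ge by force
  next
    fix \<gamma> assume "\<gamma> \<in> (\<lambda>(e,g). e#g) ` Sigma F T"
    then obtain e g' where ge: "\<gamma> = e#g'" "e \<in> F" "g' \<in> T e" by auto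
    show "\<gamma> \<in> W x z"
    proof (cases "t e = z")
      case True then show ?thesis using ge unfolding F_def T_def walks_def
        by (auto simp: is_walk_Cons)
    next
      case False
      then have g': "g' \<in> W (t e) z" using ge unfolding T_def by auto
      then have "g' \<noteq> []" by (rule walks_nonempty)
      then show ?thesis using ge g' unfolding F_def walks_def
        by (auto simp: is_walk_Cons)
    qed
  qed
  have finF: "finite F"
  proof -
    have "F \<subseteq> hd ` W x z"
    proof
      fix e assume e: "e \<in> F"
      have "T e \<noteq> {}" using e unfolding T_def F_def walk_le_def by auto
      then obtain g where "g \<in> T e" by blast
      then have "e#g \<in> W x z" unfolding WS using e by force
      then show "e \<in> hd ` W x z" by force
    qed
    then show ?thesis using fin_W finite_subset by blast
  qed
  have finT: "\<forall>e\<in>F. finite (T e)" unfolding T_def using fin_W by auto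
  have "(\<Sum>\<gamma>\<in>W x z. w \<gamma>) = (\<Sum>(e,g)\<in>Sigma F T. (w (e#g) :: 'r))"
    unfolding WS by (subst sum.reindex) (auto simp: inj_on_def case_prod_beta)
  also have "\<dots> = (\<Sum>e\<in>F. \<Sum>g\<in>T e. w (e#g))"
    by (rule sym[OF sum.Sigma[OF finF finT]])
  also have "\<dots> = (\<Sum>e\<in>F. - ii x * nu (t e) z)"
  proof (rule sum.cong[OF refl])
    fix e assume e: "e \<in> F"
    show "(\<Sum>g\<in>T e. w (e#g)) = - ii x * nu (t e) z"
    proof (cases "t e = z")
      case True then show ?thesis using e unfolding T_def F_def nu_def by (simp add: w_single)
    next
      case False
      have "(\<Sum>g\<in>T e. w (e#g)) = (\<Sum>g\<in>W (t e) z. - ii x * w g)"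
        using False e unfolding T_def F_def
        by (intro sum.cong) (auto simp: w_Cons walks_nonempty walks_def)
      then show ?thesis using False unfolding nu_def by (simp add: sum_distrib_left)
    qed
  qed
  also have "\<dots> = - ii x * (\<Sum>e\<in>F. nu (t e) z)" by (simp add: sum_distrib_left)
  also have "(\<Sum>e\<in>F. nu (t e) z :: 'r) = (\<Sum>y\<in>I. \<Sum>e\<in>{e. e \<in> F \<and> t e = y}. nu (t e) z)"
  proof (rule sum.group[symmetric, OF finF])
    show "finite I" unfolding I_def by (rule finite_subset[OF _ interval_fin[of x z]]) auto
    show "t ` F \<subseteq> I" unfolding F_def I_def using edge_le by (auto simp: edges_def)
  qed
  also have "\<dots> = (\<Sum>y\<in>I. of_nat (card (E x y)) * nu y z)"
  proof (rule sum.cong[OF refl])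
    fix y assume "y \<in> I"
    then have "{e. e \<in> F \<and> t e = y} = E x y" unfolding I_def F_def edges_def by auto
    moreover have "(\<Sum>e\<in>E x y. nu (t e) z) = (\<Sum>e\<in>E x y. (nu y z :: 'r))"
      by (rule sum.cong) (auto simp: edges_def)
    ultimately show "(\<Sum>e\<in>{e. e \<in> F \<and> t e = y}. nu (t e) z) = of_nat (card (E x y)) * (nu y z :: 'r)"
      by simp
  qed
  finally show ?thesis unfolding I_def .
qed

lemma left_decomp:
  assumes xz: "x \<noteq> z"
  shows "(\<Sum>\<gamma>\<in>W x z. w \<gamma>) = - (\<Sum>y\<in>{y. le x y \<and> le y z \<and> y \<noteq> z}. (nu x y :: 'r::comm_ring_1) * of_nat (card (E y z))) * ii z"
proof -
  define F where "F = {e. t e = z \<and> s e \<noteq> z \<and> le x (s e)}"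
  define T where "T e = (if s e = x then {[]} else W x (s e))" for e
  define I where "I = {y. le x y \<and> le y z \<and> y \<noteq> z}"
  have WS: "W x z = (\<lambda>(e,g). g@[e]) ` Sigma F T"
  proof (rule set_eqI, rule iffI)
    fix \<gamma> assume g: "\<gamma> \<in> W x z"
    define e where "e = last \<gamma>"
    define g' where "g' = butlast \<gamma>"
    have ge: "\<gamma> = g'@[e]" using walks_nonempty[OF g] unfolding e_def g'_def by simp
    have "e \<in> F \<and> g' \<in> T e"
    proof (cases "g' = []")
      case True then show ?thesis using g ge xz
        unfolding F_def T_def walks_def by (auto simp: is_walk_def le_refl)
    next
      case False
      then have g'W: "g' \<in> W x (s e)" using g ge unfolding walks_def by (auto simp: is_walk_snoc)
      then have "s e \<noteq> x" using no_closed by auto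
      then show ?thesis using g ge g'W unfolding F_def T_def walks_def walk_le_def
        by (auto simp: is_walk_snoc)
    qed
    then show "\<gamma> \<in> (\<lambda>(e,g). g@[e]) ` Sigma F T" using ge by force
  next
    fix \<gamma> assume "\<gamma> \<in> (\<lambda>(e,g). g@[e]) ` Sigma F T"
    then obtain e g' where ge: "\<gamma> = g'@[e]" "e \<in> F" "g' \<in> T e" by auto
    show "\<gamma> \<in> W x z"
    proof (cases "s e = x")
      case True then show ?thesis using ge unfolding F_def T_def walks_def
        by (auto simp: is_walk_def)
    next
      case False
      then have g': "g' \<in> W x (s e)" using ge unfolding T_def by auto
      then have "g' \<noteq> []" by (rule walks_nonempty)
      then show ?thesis using ge g' unfolding F_def walks_def
        by (auto simp: is_walk_snoc)
    qed
  qed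
  have finF: "finite F"
  proof -
    have "F \<subseteq> last ` W x z"
    proof
      fix e assume e: "e \<in> F"
      have "T e \<noteq> {}" using e unfolding T_def F_def walk_le_def by auto
      then obtain g where "g \<in> T e" by blast
      then have "g@[e] \<in> W x z" unfolding WS using e by force
      then show "e \<in> last ` W x z" by force
    qed
    then show ?thesis using fin_W finite_subset by blast
  qed
  have finT: "\<forall>e\<in>F. finite (T e)" unfolding T_def using fin_W by auto
  have "(\<Sum>\<gamma>\<in>W x z. w \<gamma>) = (\<Sum>(e,g)\<in>Sigma F T. (w (g@[e]) :: 'r))"
    unfolding WS by (subst sum.reindex) (auto simp: inj_on_def case_prod_beta)
  also have "\<dots> = (\<Sum>e\<in>F. \<Sum>g\<in>T e. w (g@[e]))"
    by (rule sym[OF sum.Sigma[OF finF finT]])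
  also have "\<dots> = (\<Sum>e\<in>F. - (nu x (s e) * ii z))"
  proof (rule sum.cong[OF refl])
    fix e assume e: "e \<in> F"
    show "(\<Sum>g\<in>T e. w (g@[e])) = - (nu x (s e) * (ii z :: 'r))"
    proof (cases "s e = x")
      case True then show ?thesis using e unfolding T_def F_def nu_def by (simp add: w_single)
    next
      case False
      have "(\<Sum>g\<in>T e. w (g@[e])) = (\<Sum>g\<in>W x (s e). - (w g * (ii z :: 'r)))"
        using False e unfolding T_def F_def
        by (intro sum.cong) (auto simp: w_snoc walks_nonempty)
      then show ?thesis using False unfolding nu_def by (simp add: sum_distrib_right sum_negf)
    qed
  qed
  also have "\<dots> = - (\<Sum>e\<in>F. nu x (s e)) * ii z" by (simp add: sum_distrib_right sum_negf)
  also have "(\<Sum>e\<in>F. nu x (s e) :: 'r) = (\<Sum>y\<in>I. \<Sum>e\<in>{e. e \<in> F \<and> s e = y}. nu x (s e))"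
  proof (rule sum.group[symmetric, OF finF])
    show "finite I" unfolding I_def by (rule finite_subset[OF _ interval_fin[of x z]]) auto
    show "s ` F \<subseteq> I" unfolding F_def I_def using edge_le by (auto simp: edges_def)
  qed
  also have "\<dots> = (\<Sum>y\<in>I. nu x y * of_nat (card (E y z)))"
  proof (rule sum.cong[OF refl])
    fix y assume "y \<in> I"
    then have "{e. e \<in> F \<and> s e = y} = E y z" unfolding I_def F_def edges_def by auto
    moreover have "(\<Sum>e\<in>E y z. nu x (s e)) = (\<Sum>e\<in>E y z. (nu x y :: 'r))"
      by (rule sum.cong) (auto simp: edges_def)
    ultimately show "(\<Sum>e\<in>{e. e \<in> F \<and> s e = y}. nu x (s e)) = (nu x y :: 'r) * of_nat (card (E y z))"
      by (simp add: mult.commute)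
  qed
  finally show ?thesis unfolding I_def .
qed

end

lemma inverse_unique:
  assumes rfl: "\<And>a. le a a"
    and trans: "\<And>a b c. le a b \<Longrightarrow> le b c \<Longrightarrow> le a c"
    and fin: "\<And>a b. finite {y. le a y \<and> le y b}"
    and L: "\<And>a b. le a b \<Longrightarrow> conv le \<mu> f a b = inc_unit a b"
    and R: "\<And>a b. le a b \<Longrightarrow> conv le f \<nu> a b = inc_unit a b"
    and xz: "le x z"
  shows "\<mu> x z = (\<nu> x z :: 'r::comm_ring_1)"
proof -
  define J where "J = {y. le x y \<and> le y z}"
  have fJ: "finite J" unfolding J_def by (rule fin)
  have "\<mu> x z = (\<Sum>y\<in>J. \<mu> x y * inc_unit y z)"
  proof -
    have "(\<Sum>y\<in>J. \<mu> x y * inc_unit y z) = (\<Sum>y\<in>J. if y = z then \<mu> x y else 0)"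
      by (rule sum.cong) (auto simp: inc_unit_def)
    also have "\<dots> = \<mu> x z" using fJ xz rfl unfolding J_def by simp
    finally show ?thesis by simp
  qed
  also have "\<dots> = (\<Sum>y\<in>J. \<mu> x y * conv le f \<nu> y z)"
    by (rule sum.cong) (auto simp: J_def R)
  also have "\<dots> = (\<Sum>y\<in>J. \<Sum>v\<in>{v. v \<in> J \<and> le y v}. \<mu> x y * f y v * \<nu> v z)"
  proof (rule sum.cong[OF refl])
    fix y assume y: "y \<in> J"
    have "{v. v \<in> J \<and> le y v} = {v. le y v \<and> le v z}" using y trans unfolding J_def by blast
    then show "\<mu> x y * conv le f \<nu> y z = (\<Sum>v\<in>{v. v \<in> J \<and> le y v}. \<mu> x y * f y v * \<nu> v z)"
      unfolding conv_def by (simp add: sum_distrib_left mult.assoc)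
  qed
  also have "\<dots> = (\<Sum>v\<in>J. \<Sum>y\<in>{y. y \<in> J \<and> le y v}. \<mu> x y * f y v * \<nu> v z)"
    by (rule sum.swap_restrict[OF fJ fJ])
  also have "\<dots> = (\<Sum>v\<in>J. conv le \<mu> f x v * \<nu> v z)"
  proof (rule sum.cong[OF refl])
    fix v assume v: "v \<in> J"
    have "{y. y \<in> J \<and> le y v} = {y. le x y \<and> le y v}" using v trans unfolding J_def by blast
    then show "(\<Sum>y\<in>{y. y \<in> J \<and> le y v}. \<mu> x y * f y v * \<nu> v z) = conv le \<mu> f x v * \<nu> v z"
      unfolding conv_def by (simp add: sum_distrib_right)
  qed
  also have "\<dots> = (\<Sum>v\<in>J. inc_unit x v * \<nu> v z)"
    by (rule sum.cong) (auto simp: J_def L)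
  also have "\<dots> = (\<Sum>v\<in>J. if x = v then \<nu> v z else 0)"
    by (rule sum.cong) (auto simp: inc_unit_def)
  also have "\<dots> = \<nu> x z" using fJ xz rfl unfolding J_def by simp
  finally show ?thesis .
qed

context lfg begin

lemma ii_inv:
  assumes "Q_algebra TYPE('r::comm_ring_1)"
  shows "of_nat (card (E x x)) * (ii x :: 'r) = 1"
  unfolding ii_def using nat_inv[OF assms d_pos] .

lemma int_split1: "le x z \<Longrightarrow> x \<noteq> z \<Longrightarrow>
  {y. le x y \<and> le y z} = insert x {y. le x y \<and> le y z \<and> y \<noteq> x}"
  using le_refl by auto

lemma int_split2: "le x z \<Longrightarrow> x \<noteq> z \<Longrightarrow>
  {y. le x y \<and> le y z} = insert z {y. le x y \<and> le y z \<and> y \<noteq> z}"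
  using le_refl by auto

lemma int_single: "{y. le x y \<and> le y x} = {x}"
  using le_refl le_antisym by auto

lemma fin_I: "finite {y. le x y \<and> le y z \<and> P y}"
  by (rule finite_subset[OF _ interval_fin[of x z]]) auto

lemma right_inv:
  assumes Q: "Q_algebra TYPE('r::comm_ring_1)" and xz: "le x z"
  shows "conv le (\<lambda>x y. of_nat (card (E x y))) nu x z = (inc_unit x z :: 'r)"
proof (cases "x = z")
  case True then show ?thesis
    unfolding conv_def int_single True using ii_inv[OF Q] by (simp add: nu_def inc_unit_def)
next
  case False
  define S :: 'r where "S = (\<Sum>y\<in>{y. le x y \<and> le y z \<and> y \<noteq> x}. of_nat (card (E x y)) * nu y z)"
  have "conv le (\<lambda>x y. of_nat (card (E x y))) nu x z = of_nat (card (E x x)) * nu x z + S"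
    unfolding conv_def int_split1[OF xz False] S_def by (subst sum.insert) (auto simp: fin_I)
  also have "nu x z = - ii x * S" using False right_decomp[OF False] unfolding S_def by (simp add: nu_def[of x z])
  finally have "conv le (\<lambda>x y. of_nat (card (E x y))) nu x z = - (of_nat (card (E x x)) * ii x) * S + S"
    by (simp add: algebra_simps)
  then show ?thesis using ii_inv[OF Q] False by (simp add: inc_unit_def)
qed

lemma left_inv:
  assumes Q: "Q_algebra TYPE('r::comm_ring_1)" and xz: "le x z"
  shows "conv le nu (\<lambda>x y. of_nat (card (E x y))) x z = (inc_unit x z :: 'r)"
proof (cases "x = z")
  case True then show ?thesis
    unfolding conv_def int_single True using ii_inv[OF Q] by (simp add: nu_def inc_unit_def mult.commute)
next
  case False
  define S :: 'r where "S = (\<Sum>y\<in>{y. le x y \<and> le y z \<and> y \<noteq> z}. nu x y * of_nat (card (E y z)))"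
  have "conv le nu (\<lambda>x y. of_nat (card (E x y))) x z = nu x z * of_nat (card (E z z)) + S"
    unfolding conv_def int_split2[OF xz False] S_def by (subst sum.insert) (auto simp: fin_I)
  also have "nu x z = - S * ii z" using False left_decomp[OF False] unfolding S_def by (simp add: nu_def[of x z])
  finally have "conv le nu (\<lambda>x y. of_nat (card (E x y))) x z = - (of_nat (card (E z z)) * ii z) * S + S"
    by (simp add: algebra_simps)
  then show ?thesis using ii_inv[OF Q] False by (simp add: inc_unit_def)
qed

end

theorem theorem4p2:
  fixes s t :: "'e \<Rightarrow> 'x"
  assumes "reflexive_graph s t"
    and "locally_finite_graph s t"
    and "Q_algebra TYPE('r::comm_ring_1)"
  defines "xi \<equiv> (\<lambda>x y. of_nat (card (edges s t x y)) :: 'r)"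
  shows "inc_invertible (walk_le s t) xi
    \<and> (\<forall>\<mu>. inc_inverse (walk_le s t) xi \<mu> \<longrightarrow>
         (\<forall>x. \<mu> x x = nat_inv (card (edges s t x x)))
       \<and> (\<forall>x y. x \<noteq> y \<and> walk_le s t x y \<longrightarrow>
            \<mu> x y = (\<Sum>\<gamma>\<in>walks s t x y. (-1) ^ length \<gamma> *
               (nat_inv (card (edges s t (s (hd \<gamma>)) (s (hd \<gamma>))))
                * (\<Prod>i<length \<gamma>. nat_inv (card (edges s t (t (\<gamma> ! i)) (t (\<gamma> ! i)))))))))"
proof -
  interpret lfg s t using assms(1,2) by unfold_locales
  let ?nu = "nu :: 'x \<Rightarrow> 'x \<Rightarrow> 'r"
  have R: "\<And>a b. le a b \<Longrightarrow> conv le xi ?nu a b = inc_unit a b"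
    unfolding xi_def using right_inv[OF assms(3)] by blast
  have L: "\<And>a b. le a b \<Longrightarrow> conv le ?nu xi a b = inc_unit a b"
    unfolding xi_def using left_inv[OF assms(3)] by blast
  have inv: "inc_inverse le xi ?nu" unfolding inc_inverse_def using R L by blast
  have uniq: "\<mu> x z = ?nu x z" if "inc_inverse le xi \<mu>" "le x z" for \<mu> x z
    by (rule inverse_unique[of le, OF le_refl le_trans interval_fin _ R that(2)])
      (use that(1) in \<open>auto simp: inc_inverse_def\<close>)
  show ?thesis
  proof (intro conjI allI impI)
    show "inc_invertible le xi" unfolding inc_invertible_def using inv by blast
  next
    fix \<mu> x assume "inc_inverse le xi \<mu>"
    then show "\<mu> x x = nat_inv (card (E x x))"
      using uniq[of \<mu> x x] le_refl by (simp add: nu_def ii_def)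
  next
    fix \<mu> x y assume m: "inc_inverse le xi \<mu>" and xy: "x \<noteq> y \<and> le x y"
    then show "\<mu> x y = (\<Sum>\<gamma>\<in>W x y. (-1) ^ length \<gamma> *
               (nat_inv (card (E (s (hd \<gamma>)) (s (hd \<gamma>))))
                * (\<Prod>i<length \<gamma>. nat_inv (card (E (t (\<gamma> ! i)) (t (\<gamma> ! i)))))))"
      using uniq[OF m, of x y] by (simp add: nu_def w_def ii_def)
  qed
qed

end
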